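(* For any integers $k, m \ge 1$: if both $k$ and $m$ are even, then \[ 2O(k,m) = B(k,m) + B\!\left(\tfrac{k}{2}, \tfrac{m-2}{2}\right) - B\!\left(\tfrac{k}{2}, \tfrac{m}{2}\right) - B\!\left(\tfrac{k-2}{2}, \tfrac{m-2}{2}\right); \] otherwise, \[ 2O(k,m) = B(k,m) - 2B\!\left(\left\lfloor \tfrac{k}{2}\right\rfloor, \left\lfloor \tfrac{m-1}{2}\right\rfloor\right). \]
   Context: For $k \ge 1$, $m \ge 0$, $\mathcal{B}(k,m)$ is the set of binary words of length $m$ that avoid (do not contain as a not-necessarily-contiguous subsequence) every word $0^j1^{k-j}$, $j\in\{0,\dots,k\}$, and $B(k,m) = |\mathcal{B}(k,m)|$; also $B(0,m) = 0$ for all $m \ge 0$ (so $B(k,0)=1$ for $k\ge1$). For a binary word $w=w_1\cdots w_n$, $G(w)$ is the permutation of $[n]$ listing first the positions of zeros of $w$ in increasing order, then the positions of ones in increasing order; $w$ is odd if $G(w)$ has an odd number of inversions. $O(k,m)$ is the number of odd words in $\mathcal{B}(k,m)$. *)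

theory Defs
  imports Main "HOL-Library.Sublist"
begin

text \<open>Binary words are lists over the alphabet {0,1} (naturals 0 and 1).
  Subsequence containment is the library's (not necessarily contiguous) subseq.\<close>

definition binwords :: "nat \<Rightarrow> nat list set" where
  "binwords m = {w. length w = m \<and> set w \<subseteq> {0,1}}"

definition forb :: "nat \<Rightarrow> nat \<Rightarrow> nat list" where
  "forb k j = replicate j 0 @ replicate (k - j) 1"

definition Bset :: "nat \<Rightarrow> nat \<Rightarrow> nat list set" where
  "Bset k m = {w \<in> binwords m. \<forall>j\<in>{0..k}. \<not> subseq (forb k j) w}"

text \<open>B(0,m) = 0 by the paper's convention.\<close>
definition B :: "nat \<Rightarrow> nat \<Rightarrow> nat" where
  "B k m = (if k = 0 then 0 else card (Bset k m))"

definition G :: "nat list \<Rightarrow> nat list" where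
  "G w = filter (\<lambda>i. w ! (i - 1) = 0) [1..<length w + 1]
       @ filter (\<lambda>i. w ! (i - 1) = 1) [1..<length w + 1]"

definition inversions :: "nat list \<Rightarrow> nat" where
  "inversions p = card {(i, j). i < j \<and> j < length p \<and> p ! i > p ! j}"

definition odd_word :: "nat list \<Rightarrow> bool" where
  "odd_word w = odd (inversions (G w))"

definition Ocnt :: "nat \<Rightarrow> nat \<Rightarrow> nat" where
  "Ocnt k m = card {w \<in> Bset k m. odd_word w}"

end

theory Submission
  imports Defs
begin



lemma subseq_rep: "subseq (replicate j a) v \<longleftrightarrow> j \<le> count_list v a"
proof (induction v arbitrary: j)
  case Nil then show ?case by (auto dest: list_emb_Nil2)
next
  case (Cons x v)
  show ?case
  proof (cases j)
    case 0 then show ?thesis by auto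
  next
    case (Suc i)
    then show ?thesis using Cons[of i] Cons[of j] by auto
  qed
qed

lemma subseq_split: "subseq (xs @ ys) zs \<Longrightarrow> \<exists>p. subseq xs (take p zs) \<and> subseq ys (drop p zs)"
proof (induction zs arbitrary: xs)
  case Nil then show ?case by (auto dest!: list_emb_Nil2)
next
  case (Cons z zs)
  show ?case
  proof (cases xs)
    case Nil then show ?thesis using Cons.prems by (intro exI[of _ 0]) auto
  next
    case (Cons x xs')
    show ?thesis
    proof (cases "x = z")
      case True
      then have "subseq (xs' @ ys) zs" using Cons.prems Cons by auto
      then obtain p where "subseq xs' (take p zs)" "subseq ys (drop p zs)" using Cons.IH by blast
      then show ?thesis using True Cons by (intro exI[of _ "Suc p"]) auto
    next
      case False
      then have "subseq (xs @ ys) zs" using Cons.prems Cons by auto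
      then obtain p where "subseq xs (take p zs)" "subseq ys (drop p zs)" using Cons.IH by blast
      then show ?thesis by (intro exI[of _ "Suc p"]) auto
    qed
  qed
qed

lemma subseq_forb_iff: "subseq (replicate j 0 @ replicate l 1) w \<longleftrightarrow>
   (\<exists>p. j \<le> count_list (take p w) 0 \<and> l \<le> count_list (drop p w) 1)"
proof
  assume "subseq (replicate j 0 @ replicate l 1) w"
  then show "\<exists>p. j \<le> count_list (take p w) 0 \<and> l \<le> count_list (drop p w) 1"
    using subseq_split subseq_rep by metis
next
  assume "\<exists>p. j \<le> count_list (take p w) 0 \<and> l \<le> count_list (drop p w) 1"
  then obtain p where "j \<le> count_list (take p w) 0" "l \<le> count_list (drop p w) 1" by blast
  then have "subseq (replicate j 0 @ replicate l 1) (take p w @ drop p w)"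
    by (intro list_emb_append_mono) (auto simp: subseq_rep)
  then show "subseq (replicate j 0 @ replicate l 1) w" by simp
qed

fun okh :: "int \<Rightarrow> int \<Rightarrow> nat list \<Rightarrow> bool" where
  "okh K h [] = (h < K)"
| "okh K h (x#w) = (h < K \<and> okh K (if x = 0 then h + 1 else h - 1) w)"

lemma okh_iff: "set w \<subseteq> {0,1} \<Longrightarrow> okh K h w \<longleftrightarrow>
   (\<forall>p\<le>length w. h + int (count_list (take p w) 0) - int (count_list (take p w) 1) < K)"
proof (induction w arbitrary: h)
  case Nil then show ?case by auto
next
  case (Cons x w)
  have IH: "okh K (if x = 0 then h + 1 else h - 1) w \<longleftrightarrow>
     (\<forall>p\<le>length w. (if x = 0 then h + 1 else h - 1) + int (count_list (take p w) 0) - int (count_list (take p w) 1) < K)"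
    using Cons by auto
  have "(\<forall>p\<le>length (x#w). h + int (count_list (take p (x#w)) 0) - int (count_list (take p (x#w)) 1) < K)
     \<longleftrightarrow> h < K \<and> (\<forall>q\<le>length w. h + int (count_list (take (Suc q) (x#w)) 0) - int (count_list (take (Suc q) (x#w)) 1) < K)"
    (is "?L \<longleftrightarrow> ?R")
  proof
    assume ?L then show ?R by (metis Suc_le_mono length_Cons le0 take0 count_list.simps(1) add_0_right diff_zero of_nat_0)
  next
    assume r: ?R
    show ?L
    proof (intro allI impI)
      fix p assume "p \<le> length (x#w)"
      then show "h + int (count_list (take p (x#w)) 0) - int (count_list (take p (x#w)) 1) < K"
        using r by (cases p) auto
    qed
  qed
  also have "\<dots> \<longleftrightarrow> okh K h (x#w)" using IH Cons.prems by (auto simp: algebra_simps)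
  finally show ?case by simp
qed

lemma count01: "set (w::nat list) \<subseteq> {0,1} \<Longrightarrow> count_list w 0 + count_list w 1 = length w"
proof (induction w)
  case (Cons x w)
  then have a: "set w \<subseteq> {0,1}" and b: "x = 0 \<or> x = 1" by auto
  from Cons.IH[OF a] b show ?case by auto
qed simp

lemma Bset_iff: "w \<in> Bset k m \<longleftrightarrow> length w = m \<and> set w \<subseteq> {0,1} \<and> okh (int k) (int (count_list w 1)) w"
proof -
  have key: "(\<exists>j\<in>{0..k}. subseq (forb k j) w) \<longleftrightarrow>
        (\<exists>p\<le>length w. k \<le> count_list (take p w) 0 + count_list (drop p w) 1)"
  proof
    assume "\<exists>j\<in>{0..k}. subseq (forb k j) w"
    then obtain j p where "j \<le> k" "j \<le> count_list (take p w) 0" "k - j \<le> count_list (drop p w) 1"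
      unfolding forb_def subseq_forb_iff by auto
    then show "\<exists>p\<le>length w. k \<le> count_list (take p w) 0 + count_list (drop p w) 1"
      by (intro exI[of _ "min p (length w)"]) (auto simp: min_def)
  next
    assume "\<exists>p\<le>length w. k \<le> count_list (take p w) 0 + count_list (drop p w) 1"
    then obtain p where p: "k \<le> count_list (take p w) 0 + count_list (drop p w) 1" by blast
    define j where "j = min k (count_list (take p w) 0)"
    have "j \<in> {0..k}" "subseq (forb k j) w" unfolding forb_def subseq_forb_iff using p
      by (auto simp: j_def intro!: exI[of _ p])
    then show "\<exists>j\<in>{0..k}. subseq (forb k j) w" by blast
  qed
  show ?thesis
  proof (cases "set w \<subseteq> {0,1}")
    case False then show ?thesis by (auto simp: Bset_def binwords_def)
  next
    case True
    have c: "count_list w 1 = count_list (take p w) 1 + count_list (drop p w) 1" for p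
      by (metis append_take_drop_id count_list_append)
    have "okh (int k) (int (count_list w 1)) w \<longleftrightarrow>
        (\<forall>p\<le>length w. count_list (take p w) 0 + count_list (drop p w) 1 < k)"
      unfolding okh_iff[OF True]
    proof (intro iff_allI imp_cong refl)
      fix p show "int (count_list w 1) + int (count_list (take p w) 0) - int (count_list (take p w) 1) < int k
         \<longleftrightarrow> count_list (take p w) 0 + count_list (drop p w) 1 < k"
        using c[of p] by linarith
    qed
    then show ?thesis using key True by (auto simp: Bset_def binwords_def not_le)
  qed
qed




lemma inv_app:
  fixes xs ys :: "nat list"
  assumes sx: "sorted xs" and sy: "sorted ys"
  shows "inversions (xs @ ys) = sum_list (map (\<lambda>x. length (filter (\<lambda>y. y < x) ys)) xs)"
proof -
  let ?n = "length xs"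
  let ?S = "{(i, j). i < j \<and> j < length (xs @ ys) \<and> (xs @ ys) ! i > (xs @ ys) ! j}"
  let ?T = "SIGMA i:{..<?n}. {j. j < length ys \<and> ys ! j < xs ! i}"
  have eq: "?S = (\<lambda>(i, j). (i, j + ?n)) ` ?T"
  proof (intro equalityI subsetI)
    fix p assume "p \<in> ?S"
    then obtain i j where p: "p = (i, j)" "i < j" "j < ?n + length ys" "(xs @ ys) ! i > (xs @ ys) ! j" by auto
    have "i < ?n"
    proof (rule ccontr)
      assume "\<not> i < ?n"
      then have "(xs @ ys) ! i = ys ! (i - ?n)" "(xs @ ys) ! j = ys ! (j - ?n)" using p by (auto simp: nth_append)
      moreover have "ys ! (i - ?n) \<le> ys ! (j - ?n)" using p \<open>\<not> i < ?n\<close> by (intro sorted_nth_mono[OF sy]) auto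
      ultimately show False using p by auto
    qed
    have "\<not> j < ?n"
    proof
      assume "j < ?n"
      then have "(xs @ ys) ! i = xs ! i" "(xs @ ys) ! j = xs ! j" using p \<open>i < ?n\<close> by (auto simp: nth_append)
      moreover have "xs ! i \<le> xs ! j" using p \<open>j < ?n\<close> by (intro sorted_nth_mono[OF sx]) auto
      ultimately show False using p by auto
    qed
    then have "(xs @ ys) ! j = ys ! (j - ?n)" "(xs @ ys) ! i = xs ! i" using \<open>i < ?n\<close> by (auto simp: nth_append)
    then have "(i, j - ?n) \<in> ?T" using p \<open>i < ?n\<close> \<open>\<not> j < ?n\<close> by auto
    moreover have "p = (\<lambda>(i, j). (i, j + ?n)) (i, j - ?n)" using p \<open>\<not> j < ?n\<close> by auto
    ultimately show "p \<in> (\<lambda>(i, j). (i, j + ?n)) ` ?T" by blast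
  next
    fix p assume "p \<in> (\<lambda>(i, j). (i, j + ?n)) ` ?T"
    then obtain i j where "p = (i, j + ?n)" "i < ?n" "j < length ys" "ys ! j < xs ! i" by auto
    then show "p \<in> ?S" by (auto simp: nth_append)
  qed
  have inj: "inj_on (\<lambda>(i, j). (i, j + ?n)) ?T" by (auto simp: inj_on_def)
  have "inversions (xs @ ys) = card ?T" unfolding inversions_def eq using card_image[OF inj] by simp
  also have "\<dots> = (\<Sum>i<?n. card {j. j < length ys \<and> ys ! j < xs ! i})" by (simp)
  also have "\<dots> = (\<Sum>i<?n. length (filter (\<lambda>y. y < xs ! i) ys))" by (simp add: length_filter_conv_card)
  also have "\<dots> = sum_list (map (\<lambda>x. length (filter (\<lambda>y. y < x) ys)) xs)"
    by (simp add: sum_list_sum_nth atLeast0LessThan)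
  finally show ?thesis .
qed

definition Zl :: "nat list \<Rightarrow> nat list" where
  "Zl w = filter (\<lambda>i. w ! (i - 1) = 0) [1..<length w + 1]"
definition Ol :: "nat list \<Rightarrow> nat list" where
  "Ol w = filter (\<lambda>i. w ! (i - 1) = 1) [1..<length w + 1]"

lemma Zl_snoc: "Zl (w @ [x]) = Zl w @ (if x = 0 then [length w + 1] else [])"
proof -
  have "filter (\<lambda>i. (w @ [x]) ! (i - 1) = 0) [1..<length w + 1] = filter (\<lambda>i. w ! (i - 1) = 0) [1..<length w + 1]"
    by (rule filter_cong) (auto simp: nth_append)
  then show ?thesis unfolding Zl_def by (simp add: nth_append)
qed

lemma Ol_snoc: "Ol (w @ [x]) = Ol w @ (if x = 1 then [length w + 1] else [])"
proof -
  have "filter (\<lambda>i. (w @ [x]) ! (i - 1) = 1) [1..<length w + 1] = filter (\<lambda>i. w ! (i - 1) = 1) [1..<length w + 1]"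
    by (rule filter_cong) (auto simp: nth_append)
  then show ?thesis unfolding Ol_def by (simp add: nth_append)
qed

lemma Ol_set: "set (Ol w) \<subseteq> {1..length w}" unfolding Ol_def by auto
lemma Zl_set: "set (Zl w) \<subseteq> {1..length w}" unfolding Zl_def by auto
lemma Ol_len: "length (Ol w) = count_list w 1"
  by (induction w rule: rev_induct) (auto simp: Ol_snoc Ol_def[of "[]"])

fun ninv :: "nat list \<Rightarrow> nat" where
  "ninv [] = 0"
| "ninv (x # w) = (if x = 1 then count_list w 0 else 0) + ninv w"

lemma ninv_snoc: "ninv (w @ [x]) = ninv w + (if x = 0 then count_list w 1 else 0)"
  by (induction w) auto

abbreviation FF :: "nat list \<Rightarrow> nat list \<Rightarrow> nat" where
  "FF xs ys \<equiv> sum_list (map (\<lambda>x. length (filter (\<lambda>y. y < x) ys)) xs)"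

lemma FF_ninv: "FF (Zl w) (Ol w) = ninv w"
proof (induction w rule: rev_induct)
  case Nil then show ?case by (simp add: Zl_def)
next
  case (snoc x w)
  have a: "length (filter (\<lambda>y. y < length w + 1) (Ol w)) = count_list w 1"
  proof -
    have "filter (\<lambda>y. y < length w + 1) (Ol w) = Ol w" using Ol_set[of w] by (auto simp: filter_id_conv)
    then show ?thesis by (simp add: Ol_len)
  qed
  have b: "FF (Zl w) (Ol w @ [length w + 1]) = FF (Zl w) (Ol w)"
  proof -
    have "\<And>z. z \<in> set (Zl w) \<Longrightarrow> \<not> length w + 1 < z" using Zl_set[of w] by auto
    then show ?thesis by (intro arg_cong[where f=sum_list] map_cong) auto
  qed
  show ?case using snoc a b by (auto simp: Zl_snoc Ol_snoc ninv_snoc)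
qed

lemma inv_G: "inversions (G w) = ninv w"
proof -
  have "G w = Zl w @ Ol w" unfolding G_def Zl_def Ol_def by simp
  moreover have "sorted (Zl w)" "sorted (Ol w)" unfolding Zl_def Ol_def by (metis sorted_wrt_filter sorted_upt)+
  ultimately show ?thesis using inv_app FF_ninv by simp
qed




fun aux :: "nat list \<Rightarrow> nat list" where
  "aux (a # b # r) = (if a \<noteq> b then b # a # r else a # b # aux r)"
| "aux xs = xs"

fun paired :: "nat list \<Rightarrow> bool" where
  "paired (a # b # r) = (a = b \<and> paired r)"
| "paired xs = True"

lemma aux_len[simp]: "length (aux w) = length w"
  by (induction w rule: aux.induct) auto

lemma aux_count[simp]: "count_list (aux w) a = count_list w a"
  by (induction w rule: aux.induct) auto

lemma aux_set[simp]: "set (aux w) = set w"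
  by (induction w rule: aux.induct) auto

lemma aux_aux[simp]: "aux (aux w) = w"
  by (induction w rule: aux.induct) auto

lemma aux_fix: "aux w = w \<longleftrightarrow> paired w"
  by (induction w rule: aux.induct) auto

lemma aux_sign: "set w \<subseteq> {0,1} \<Longrightarrow> aux w \<noteq> w \<Longrightarrow> odd (ninv (aux w) + ninv w)"
proof (induction w rule: aux.induct)
  case (1 a b r)
  show ?case
  proof (cases "a = b")
    case True
    then have "aux r \<noteq> r" "set r \<subseteq> {0,1}" using 1 by auto
    then have "odd (ninv (aux r) + ninv r)" using 1 True by auto
    then show ?thesis using True by auto
  next
    case False
    then have "(a = 0 \<and> b = 1) \<or> (a = 1 \<and> b = 0)" using "1.prems" by auto
    then show ?thesis using False by auto
  qed
qed auto

lemma okh_ge: "okh K h w \<Longrightarrow> h < K"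
  by (cases w) auto

lemma aux_okh: "set w \<subseteq> {0,1} \<Longrightarrow> okh K h w \<Longrightarrow> even (h + K) \<Longrightarrow> okh K h (aux w)"
proof (induction w arbitrary: h rule: aux.induct)
  case (1 a b r)
  show ?case
  proof (cases "a = b")
    case True
    have p: "even ((if a = 0 then h + 2 else h - 2) + K)" using "1.prems"(3) by auto
    have "okh K (if a = 0 then h + 2 else h - 2) r" using "1.prems" True by (auto simp: algebra_simps split: if_splits)
    then have "okh K (if a = 0 then h + 2 else h - 2) (aux r)" using 1 True p by auto
    then show ?thesis using "1.prems" True by (auto simp: algebra_simps split: if_splits)
  next
    case False
    then have ab: "(a = 0 \<and> b = 1) \<or> (a = 1 \<and> b = 0)" using "1.prems" by auto
    have "h \<noteq> K - 1" using "1.prems"(3) by presburger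
    then show ?thesis using "1.prems" False ab by auto
  qed
qed auto

definition iota :: "nat \<Rightarrow> nat list \<Rightarrow> nat list" where
  "iota k w = (if even (count_list w 1 + k) then aux w else (case w of [] \<Rightarrow> [] | x # v \<Rightarrow> x # aux v))"

lemma iota_count[simp]: "count_list (iota k w) a = count_list w a"
  unfolding iota_def by (auto split: list.split)
lemma iota_len[simp]: "length (iota k w) = length w"
  unfolding iota_def by (auto split: list.split)
lemma iota_set[simp]: "set (iota k w) = set w"
  unfolding iota_def by (cases w) auto
lemma iota_iota[simp]: "iota k (iota k w) = w"
  unfolding iota_def by (auto split: list.split)

lemma iota_fix: "iota k w = w \<longleftrightarrow> (if even (count_list w 1 + k) then paired w else paired (tl w))"
  unfolding iota_def by (auto split: list.split simp: aux_fix)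

lemma iota_sign: "set w \<subseteq> {0,1} \<Longrightarrow> iota k w \<noteq> w \<Longrightarrow> odd (ninv (iota k w) + ninv w)"
proof (cases "even (count_list w 1 + k)")
  case True
  assume "set w \<subseteq> {0,1}" "iota k w \<noteq> w"
  then show ?thesis using True aux_sign unfolding iota_def by auto
next
  case False
  assume a: "set w \<subseteq> {0,1}" "iota k w \<noteq> w"
  then obtain x v where w: "w = x # v" using False unfolding iota_def by (cases w) auto
  then have "aux v \<noteq> v" "set v \<subseteq> {0,1}" using a False unfolding iota_def by auto
  then have "odd (ninv (aux v) + ninv v)" by (rule aux_sign[rotated])
  then show ?thesis using w False unfolding iota_def by auto
qed

lemma iota_Bset: assumes "w \<in> Bset k m" shows "iota k w \<in> Bset k m"
proof -
  have w: "length w = m" "set w \<subseteq> {0,1}" "okh (int k) (int (count_list w 1)) w"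
    using assms by (auto simp: Bset_iff)
  show ?thesis
  proof (cases "even (count_list w 1 + k)")
    case True
    then have "even (int (count_list w 1) + int k)" by presburger
    then have "okh (int k) (int (count_list w 1)) (aux w)" using aux_okh w by blast
    then show ?thesis using w True by (auto simp: Bset_iff iota_def)
  next
    case False
    show ?thesis
    proof (cases w)
      case Nil then show ?thesis using assms by (simp add: iota_def)
    next
      case (Cons x v)
      let ?h = "int (count_list w 1)"
      have x: "x = 0 \<or> x = 1" "set v \<subseteq> {0,1}" using w Cons by auto
      have o: "okh (int k) (if x = 0 then ?h + 1 else ?h - 1) v" "?h < int k" using w Cons by auto
      have od: "odd (?h + int k)" using False by simp
      have "even ((if x = 0 then ?h + 1 else ?h - 1) + int k)"
      proof (cases "x = 0")
        case True then show ?thesis using od by simp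
      next
        case False
        have "?h - 1 + int k = (?h + int k) - 1" by simp
        then show ?thesis using od False by (simp del: of_nat_add)
      qed
      then have "okh (int k) (if x = 0 then ?h + 1 else ?h - 1) (aux v)" using aux_okh o x by blast
      then have "okh (int k) ?h (x # aux v)" using o by auto
      then show ?thesis using w Cons False by (auto simp: Bset_iff iota_def)
    qed
  qed
qed

lemma involution_sum:
  fixes s :: "'a \<Rightarrow> int"
  assumes fin: "finite A" and mem: "\<And>x. x \<in> A \<Longrightarrow> f x \<in> A" and inv: "\<And>x. x \<in> A \<Longrightarrow> f (f x) = x"
    and sg: "\<And>x. x \<in> A \<Longrightarrow> f x \<noteq> x \<Longrightarrow> s (f x) = - s x"
  shows "sum s A = sum s {x \<in> A. f x = x}"
proof -
  let ?N = "{x \<in> A. f x \<noteq> x}"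
  have "sum s ?N = sum (\<lambda>x. - s x) ?N"
    by (rule sum.reindex_bij_witness[where i=f and j=f]) (use mem inv sg in auto)
  also have "\<dots> = - sum s ?N" by (simp add: sum_negf)
  finally have z: "sum s ?N = 0" by simp
  have "A = {x \<in> A. f x = x} \<union> ?N" by auto
  then have "sum s A = sum s {x \<in> A. f x = x} + sum s ?N"
    using fin by (metis (no_types, lifting) sum.union_disjoint finite_Un disjoint_iff mem_Collect_eq)
  then show ?thesis using z by simp
qed

lemma Bset_finite: "finite (Bset k m)"
proof -
  have "Bset k m \<subseteq> {w. set w \<subseteq> {0,1} \<and> length w = m}" by (auto simp: Bset_def binwords_def)
  moreover have "finite {w. set w \<subseteq> ({0,1}::nat set) \<and> length w = m}" by (rule finite_lists_length_eq) auto
  ultimately show ?thesis by (rule finite_subset)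
qed

definition wsgn :: "nat list \<Rightarrow> int" where "wsgn w = (-1) ^ ninv w"

lemma S_fix: "sum wsgn (Bset k m) = sum wsgn {w \<in> Bset k m. iota k w = w}"
proof (rule involution_sum[OF Bset_finite iota_Bset iota_iota])
  fix w assume "w \<in> Bset k m" "iota k w \<noteq> w"
  then have "odd (ninv (iota k w) + ninv w)" using iota_sign by (auto simp: Bset_iff)
  then show "wsgn (iota k w) = - wsgn w" unfolding wsgn_def
    by (auto simp: minus_one_power_iff)
qed auto




definition dblw :: "nat list \<Rightarrow> nat list" where "dblw u = concat (map (\<lambda>x. [x, x]) u)"

lemma dbl_simps[simp]: "dblw [] = []" "dblw (x # u) = x # x # dblw u"
  by (auto simp: dblw_def)

lemma dbl_len[simp]: "length (dblw u) = 2 * length u" by (induction u) auto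
lemma dbl_count[simp]: "count_list (dblw u) a = 2 * count_list u a" by (induction u) auto
lemma dbl_set[simp]: "set (dblw u) = set u" by (induction u) auto
lemma dbl_paired: "paired (dblw u)" "paired (dblw u @ [y])" by (induction u) auto
lemma dbl_inj: "dblw u = dblw v \<Longrightarrow> u = v"
proof (induction u arbitrary: v)
  case Nil then show ?case by (cases v) auto
next
  case (Cons a u) then show ?case by (cases v) auto
qed
lemma dbl_ninv: "even (ninv (dblw u))" by (induction u) auto

lemma paired_shape: "paired w \<Longrightarrow> \<exists>u. w = dblw u \<or> (\<exists>y. w = dblw u @ [y])"
proof (induction w rule: paired.induct)
  case (1 a b r)
  then obtain u where "r = dblw u \<or> (\<exists>y. r = dblw u @ [y])" by auto
  then show ?case using 1 by (intro exI[of _ "a # u"]) auto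
qed (rule exI[of _ "[]"], simp)+

lemma okh_append: "set w \<subseteq> {0,1} \<Longrightarrow>
   okh K h (w @ v) \<longleftrightarrow> okh K h w \<and> okh K (h + int (count_list w 0) - int (count_list w 1)) v"
proof (induction w arbitrary: h)
  case Nil then show ?case using okh_ge by auto
next
  case (Cons x w)
  then have x: "x = 0 \<or> x = 1" "set w \<subseteq> {0,1}" by auto
  show ?case using Cons.IH[OF x(2)] x by (auto simp: algebra_simps)
qed

lemma okh_end: "set w \<subseteq> {0,1} \<Longrightarrow> okh K h w \<Longrightarrow> h + int (count_list w 0) - int (count_list w 1) < K"
  using okh_append[of w K h "[]"] by simp

lemma okh_dbl: "set u \<subseteq> {0,1} \<Longrightarrow> okh K (2 * h + c) (dblw u) \<longleftrightarrow> okh ((K - c + 1) div 2) h u"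
proof (induction u arbitrary: h)
  case Nil then show ?case by auto
next
  case (Cons x u)
  then have x: "x = 0 \<or> x = 1" and s: "set u \<subseteq> {0,1}" by auto
  show ?case
  proof (cases "x = 0")
    case True
    have IH: "okh K (2 * (h + 1) + c) (dblw u) \<longleftrightarrow> okh ((K - c + 1) div 2) (h + 1) u" using Cons.IH[OF s] .
    have e: "2 * h + c + 1 + 1 = 2 * (h + 1) + c" by simp
    have "okh K (2 * h + c) (dblw (x # u)) \<longleftrightarrow> 2 * h + c < K \<and> 2 * h + c + 1 < K \<and> okh K (2 * (h + 1) + c) (dblw u)"
      using True by (simp add: algebra_simps)
    also have "\<dots> \<longleftrightarrow> h < (K - c + 1) div 2 \<and> okh ((K - c + 1) div 2) (h + 1) u"
      using IH okh_ge[of K "2 * (h + 1) + c" "dblw u"] okh_ge[of "(K - c + 1) div 2" "h + 1" u] by auto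
    also have "\<dots> \<longleftrightarrow> okh ((K - c + 1) div 2) h (x # u)" using True by simp
    finally show ?thesis .
  next
    case False
    then have x1: "x = 1" using x by simp
    have IH: "okh K (2 * (h - 1) + c) (dblw u) \<longleftrightarrow> okh ((K - c + 1) div 2) (h - 1) u" using Cons.IH[OF s] .
    have e: "2 * h + c - 1 - 1 = 2 * (h - 1) + c" by simp
    have "okh K (2 * h + c) (dblw (x # u)) \<longleftrightarrow> 2 * h + c < K \<and> 2 * h + c - 1 < K \<and> okh K (2 * (h - 1) + c) (dblw u)"
      using x1 by (simp add: algebra_simps)
    also have "\<dots> \<longleftrightarrow> h < (K - c + 1) div 2 \<and> okh ((K - c + 1) div 2) (h - 1) u"
      using IH by auto
    also have "\<dots> \<longleftrightarrow> okh ((K - c + 1) div 2) h (x # u)" using x1 by simp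
    finally show ?thesis .
  qed
qed




lemma core: "set u \<subseteq> {0,1} \<Longrightarrow> okh K (int (count_list u 1)) u \<Longrightarrow>
   int (count_list u 1) < K \<and> int (count_list u 0) < K"
  using okh_ge okh_end by fastforce

lemma S3: assumes u: "set u \<subseteq> {0,1}" and x: "x = 0 \<or> x = 1" and y: "y = 0 \<or> y = 1"
    and that: "H = int (count_list (x # dblw u @ [y]) 1)"
  shows "okh K H (x # dblw u @ [y]) \<longleftrightarrow>
   (H < K \<and> okh ((K - ((if x = 0 then 1 else 0) + (if y = 1 then 1 else 0)) + 1) div 2) (int (count_list u 1)) u
    \<and> 2 * int (count_list u 0) + ((if x = 0 then 1 else 0) + (if y = 1 then 1 else 0)) < K
    \<and> 2 * int (count_list u 0) + ((if x = 0 then 1 else 0) + (if y = 1 then 1 else 0)) + (if y = 0 then 1 else -1) < K)"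
proof -
  define c :: int where "c = (if x = 0 then 1 else 0) + (if y = 1 then 1 else 0)"
  have h1: "(if x = 0 then H + 1 else H - 1) = 2 * int (count_list u 1) + c"
    using that x y by (auto simp: c_def)
  have "okh K H (x # dblw u @ [y]) \<longleftrightarrow> H < K \<and> okh K (2 * int (count_list u 1) + c) (dblw u @ [y])"
    using h1 by simp
  also have "\<dots> \<longleftrightarrow> H < K \<and> okh K (2 * int (count_list u 1) + c) (dblw u) \<and>
      okh K (2 * int (count_list u 0) + c) [y]"
    using okh_append[of "dblw u" K _ "[y]"] u by (simp add: algebra_simps)
  also have "\<dots> \<longleftrightarrow> H < K \<and> okh ((K - c + 1) div 2) (int (count_list u 1)) u \<and>
      okh K (2 * int (count_list u 0) + c) [y]"
    using okh_dbl[OF u] by simp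
  finally show ?thesis using y by (auto simp: c_def)
qed

lemma S1: assumes u: "set u \<subseteq> {0,1}" and y: "y = 0 \<or> y = 1"
  shows "okh K (int (count_list (dblw u @ [y]) 1)) (dblw u @ [y]) \<longleftrightarrow>
   (okh ((K - (if y = 1 then 1 else 0) + 1) div 2) (int (count_list u 1)) u
    \<and> 2 * int (count_list u 0) + (if y = 1 then 1 else 0) < K
    \<and> 2 * int (count_list u 0) + (if y = 1 then 1 else 0) + (if y = 0 then 1 else -1) < K)"
proof -
  define c :: int where "c = (if y = 1 then 1 else 0)"
  have h1: "int (count_list (dblw u @ [y]) 1) = 2 * int (count_list u 1) + c"
    using y by (auto simp: c_def)
  have "okh K (int (count_list (dblw u @ [y]) 1)) (dblw u @ [y]) \<longleftrightarrow> okh K (2 * int (count_list u 1) + c) (dblw u) \<and>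
      okh K (2 * int (count_list u 0) + c) [y]"
    unfolding h1 using okh_append[of "dblw u" K _ "[y]"] u by (simp add: algebra_simps)
  also have "\<dots> \<longleftrightarrow> okh ((K - c + 1) div 2) (int (count_list u 1)) u \<and>
      okh K (2 * int (count_list u 0) + c) [y]"
    using okh_dbl[OF u] by simp
  finally show ?thesis using y by (auto simp: c_def)
qed

lemma S2: assumes u: "set u \<subseteq> {0,1}" and x: "x = 0 \<or> x = 1"
  shows "okh K (int (count_list (x # dblw u) 1)) (x # dblw u) \<longleftrightarrow>
   (int (count_list (x # dblw u) 1) < K \<and> okh ((K - (if x = 0 then 1 else 0) + 1) div 2) (int (count_list u 1)) u)"
proof -
  define c :: int where "c = (if x = 0 then 1 else 0)"
  have h1: "(if x = 0 then int (count_list (x # dblw u) 1) + 1 else int (count_list (x # dblw u) 1) - 1) = 2 * int (count_list u 1) + c"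
    using x by (auto simp: c_def)
  have "okh K (int (count_list (x # dblw u) 1)) (x # dblw u) \<longleftrightarrow>
     int (count_list (x # dblw u) 1) < K \<and> okh K (2 * int (count_list u 1) + c) (dblw u)"
    using h1 by (simp only: okh.simps)
  then show ?thesis using okh_dbl[OF u] by (simp add: c_def)
qed

lemma S4: assumes u: "set u \<subseteq> {0,1}"
  shows "okh K (int (count_list (dblw u) 1)) (dblw u) \<longleftrightarrow> okh ((K + 1) div 2) (int (count_list u 1)) u"
  using okh_dbl[OF u, of K "int (count_list u 1)" 0] by simp

lemma bin_shape: "set (x # dblw u @ [y]) \<subseteq> {0,1} \<longleftrightarrow> (x = 0 \<or> x = 1) \<and> (y = 0 \<or> y = 1) \<and> set u \<subseteq> {0,1}"
  by auto




lemma kk: "int k = 2 * int (k div 2) + (if even k then 0 else 1)"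
  by (cases "even k") (auto elim!: evenE oddE)

lemma Bset_u: "u \<in> Bset K n \<longleftrightarrow> length u = n \<and> set u \<subseteq> {0,1} \<and> okh (int K) (int (count_list u 1)) u"
  by (rule Bset_iff)

lemma mem1: assumes y: "y = (if even k then 0 else 1)"
  shows "dblw u @ [y] \<in> Bset k (2 * n + 1) \<longleftrightarrow> u \<in> Bset (k div 2) n"
proof (cases "set u \<subseteq> {0,1}")
  case False then show ?thesis by (auto simp: Bset_iff)
next
  case True
  have y01: "y = 0 \<or> y = 1" using y by auto
  have K1: "(int k - (if y = 1 then 1 else 0) + 1) div 2 = int (k div 2)"
    using y kk[of k] by (cases "even k") auto
  have "okh (int k) (int (count_list (dblw u @ [y]) 1)) (dblw u @ [y]) \<longleftrightarrow> okh (int (k div 2)) (int (count_list u 1)) u"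
    using S1[OF True y01, of "int k"] core[OF True, of "int (k div 2)"] K1 y kk[of k]
    by (cases "even k") auto
  then show ?thesis using True y01 by (auto simp: Bset_iff)
qed

lemma mem2: assumes x: "x = (if even k then 1 else 0)"
  shows "x # dblw u \<in> Bset k (2 * n + 1) \<longleftrightarrow> u \<in> Bset (k div 2) n"
proof (cases "set u \<subseteq> {0,1}")
  case False then show ?thesis by (auto simp: Bset_iff)
next
  case True
  have x01: "x = 0 \<or> x = 1" using x by auto
  have K1: "(int k - (if x = 0 then 1 else 0) + 1) div 2 = int (k div 2)"
    using x kk[of k] by (cases "even k") auto
  have "okh (int k) (int (count_list (x # dblw u) 1)) (x # dblw u) \<longleftrightarrow> okh (int (k div 2)) (int (count_list u 1)) u"
    using S2[OF True x01, of "int k"] core[OF True, of "int (k div 2)"] K1 x kk[of k]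
    by (cases "even k") auto
  then show ?thesis using True x01 by (auto simp: Bset_iff)
qed

lemma mem3: assumes k: "odd k" and x01: "x = 0 \<or> x = 1"
  shows "x # dblw u @ [x] \<in> Bset k (2 * n + 2) \<longleftrightarrow> u \<in> Bset (k div 2) n"
proof (cases "set u \<subseteq> {0,1}")
  case False then show ?thesis by (auto simp: Bset_iff)
next
  case True
  have K1: "(int k - ((if x = 0 then 1 else 0) + (if x = 1 then 1 else 0)) + 1) div 2 = int (k div 2)"
    using x01 k kk[of k] by auto
  have "okh (int k) (int (count_list (x # dblw u @ [x]) 1)) (x # dblw u @ [x]) \<longleftrightarrow> okh (int (k div 2)) (int (count_list u 1)) u"
    using S3[OF True x01 x01 refl, of "int k"] core[OF True, of "int (k div 2)"] K1 x01 k kk[of k]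
    by auto
  then show ?thesis using True x01 by (auto simp: Bset_iff)
qed

lemma mem4: assumes k: "even k"
  shows "dblw u \<in> Bset k (2 * n) \<longleftrightarrow> u \<in> Bset (k div 2) n"
proof (cases "set u \<subseteq> {0,1}")
  case False then show ?thesis by (auto simp: Bset_iff)
next
  case True
  have K1: "(int k + 1) div 2 = int (k div 2)" using k kk[of k] by auto
  show ?thesis using True S4[OF True, of "int k"] K1 by (auto simp: Bset_iff)
qed

lemma mem5: assumes k: "even k" "k \<ge> 1"
  shows "0 # dblw u @ [1] \<in> Bset k (2 * n + 2) \<longleftrightarrow> u \<in> Bset (k div 2 - 1) n"
proof (cases "set u \<subseteq> {0,1}")
  case False then show ?thesis by (auto simp: Bset_iff)
next
  case True
  have x01: "(0::nat) = 0 \<or> (0::nat) = 1" "(1::nat) = 0 \<or> (1::nat) = 1" by auto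
  have K1: "(int k - 2 + 1) div 2 = int (k div 2 - 1)" using k kk[of k] by auto
  have "okh (int k) (int (count_list (0 # dblw u @ [1]) 1)) (0 # dblw u @ [1]) \<longleftrightarrow> okh (int (k div 2 - 1)) (int (count_list u 1)) u"
    using S3[OF True x01 refl, of "int k"] core[OF True, of "int (k div 2 - 1)"] K1 k kk[of k]
    by auto
  then show ?thesis using True by (auto simp: Bset_iff)
qed

lemma mem6: assumes k: "even k"
  shows "1 # dblw u @ [0] \<in> Bset k (2 * n + 2) \<longleftrightarrow> u \<in> Bset (k div 2) n"
proof (cases "set u \<subseteq> {0,1}")
  case False then show ?thesis by (auto simp: Bset_iff)
next
  case True
  have x01: "(1::nat) = 0 \<or> (1::nat) = 1" "(0::nat) = 0 \<or> (0::nat) = 1" by auto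
  have K1: "(int k + 1) div 2 = int (k div 2)" using k kk[of k] by auto
  have "okh (int k) (int (count_list (1 # dblw u @ [0]) 1)) (1 # dblw u @ [0]) \<longleftrightarrow> okh (int (k div 2)) (int (count_list u 1)) u"
    using S3[OF True x01 refl, of "int k"] core[OF True, of "int (k div 2)"] K1 k kk[of k]
    by auto
  then show ?thesis using True by (auto simp: Bset_iff)
qed




lemma sg_dbl_snoc: "wsgn (dblw u @ [y]) = 1"
  using dbl_ninv[of u] by (auto simp: wsgn_def ninv_snoc)
lemma sg_cons_dbl: "wsgn (x # dblw u) = 1"
  using dbl_ninv[of u] by (auto simp: wsgn_def)
lemma sg_dbl: "wsgn (dblw u) = 1"
  using dbl_ninv[of u] by (auto simp: wsgn_def)
lemma sg_cons_dbl_snoc: "wsgn (x # dblw u @ [y]) = (if x = 1 \<and> y = 0 then -1 else 1)"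
proof -
  have "ninv (x # dblw u @ [y]) = (if x = 1 then 2 * count_list u 0 + (if y = 0 then 1 else 0) else 0)
     + ninv (dblw u) + (if y = 0 then 2 * count_list u 1 else 0)"
    by (auto simp: ninv_snoc)
  then show ?thesis using dbl_ninv[of u] by (auto simp: wsgn_def)
qed

lemma inj_snoc: "inj (\<lambda>u. dblw u @ [y])" by (rule injI) (auto dest: dbl_inj)
lemma inj_cons: "inj (\<lambda>u. x # dblw u)" by (rule injI) (auto dest: dbl_inj)
lemma inj_cs: "inj (\<lambda>u. x # dblw u @ [y])" by (rule injI) (auto dest: dbl_inj)
lemma inj_d: "inj dblw" by (rule injI) (auto dest: dbl_inj)

lemma sum_img: assumes "inj f" "\<And>u. wsgn (f u) = c"
  shows "sum wsgn (f ` U) = c * int (card U)"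
proof -
  have "sum wsgn (f ` U) = sum (wsgn \<circ> f) U" using assms(1) by (simp add: sum.reindex inj_on_subset)
  also have "\<dots> = c * int (card U)" using assms(2) by simp
  finally show ?thesis .
qed

definition Fx :: "nat \<Rightarrow> nat \<Rightarrow> nat list set" where
  "Fx k m = {w \<in> Bset k m. iota k w = w}"

lemma Bset_bin: "w \<in> Bset k m \<Longrightarrow> length w = m \<and> set w \<subseteq> {0,1}" by (simp add: Bset_iff)

lemma Fx_odd: "Fx k (2 * n + 1) = (\<lambda>u. dblw u @ [if even k then 0 else 1]) ` Bset (k div 2) n
    \<union> (\<lambda>u. (if even k then 1 else 0) # dblw u) ` Bset (k div 2) n" (is "_ = ?A \<union> ?B")
proof (intro equalityI subsetI)
  fix w assume w: "w \<in> Fx k (2 * n + 1)"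
  then have wB: "w \<in> Bset k (2 * n + 1)" and fx: "iota k w = w" by (auto simp: Fx_def)
  have lw: "length w = 2 * n + 1" and bw: "set w \<subseteq> {0,1}" using Bset_bin[OF wB] by auto
  show "w \<in> ?A \<union> ?B"
  proof (cases "even (count_list w 1 + k)")
    case True
    then have "paired w" using fx by (simp add: iota_fix)
    then obtain u where "w = dblw u \<or> (\<exists>y. w = dblw u @ [y])" using paired_shape by blast
    moreover have "w \<noteq> dblw u"
    proof
      assume "w = dblw u"
      with lw have "2 * length u = 2 * n + 1" by simp
      then show False by arith
    qed
    ultimately obtain y where wu: "w = dblw u @ [y]" by blast
    then have lu: "length u = n" using lw by simp
    have y01: "y = 0 \<or> y = 1" using bw wu by auto
    have yeq: "y = (if even k then 0 else 1)" using True wu y01 by auto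
    have "u \<in> Bset (k div 2) n" using mem1[OF yeq, of u n] wB wu by simp
    then show ?thesis unfolding wu yeq by blast
  next
    case False
    then have "paired (tl w)" using fx by (simp add: iota_fix)
    obtain x v where wx: "w = x # v" using lw by (cases w) auto
    then have "paired v" using \<open>paired (tl w)\<close> by simp
    then obtain u where "v = dblw u \<or> (\<exists>y. v = dblw u @ [y])" using paired_shape by blast
    moreover have "\<not> (\<exists>y. v = dblw u @ [y])"
    proof
      assume "\<exists>y. v = dblw u @ [y]"
      with lw wx have "2 * length u + 1 = 2 * n" by auto
      then show False by arith
    qed
    ultimately have wu: "w = x # dblw u" using wx by blast
    have x01: "x = 0 \<or> x = 1" using bw wu by auto
    have xeq: "x = (if even k then 1 else 0)" using False wu x01 by auto
    have "u \<in> Bset (k div 2) n" using mem2[OF xeq, of u n] wB wu by simp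
    then show ?thesis unfolding wu xeq by blast
  qed
next
  fix w assume "w \<in> ?A \<union> ?B"
  then show "w \<in> Fx k (2 * n + 1)"
  proof
    assume "w \<in> ?A"
    then obtain u where u: "u \<in> Bset (k div 2) n" "w = dblw u @ [if even k then 0 else 1]" by auto
    then have "w \<in> Bset k (2 * n + 1)" using mem1[where k=k and u=u and n=n, OF refl] by simp
    moreover have "iota k w = w" unfolding iota_fix using u dbl_paired by auto
    ultimately show ?thesis by (simp add: Fx_def)
  next
    assume "w \<in> ?B"
    then obtain u where u: "u \<in> Bset (k div 2) n" "w = (if even k then 1 else 0) # dblw u" by auto
    then have "w \<in> Bset k (2 * n + 1)" using mem2[where k=k and u=u and n=n, OF refl] by simp
    moreover have "iota k w = w" unfolding iota_fix using u dbl_paired by auto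
    ultimately show ?thesis by (simp add: Fx_def)
  qed
qed

lemma S_odd: "sum wsgn (Fx k (2 * n + 1)) = 2 * int (card (Bset (k div 2) n))"
proof -
  let ?A = "(\<lambda>u. dblw u @ [if even k then 0 else 1]) ` Bset (k div 2) n"
  let ?B = "(\<lambda>u. (if even k then 1 else 0) # dblw u) ` Bset (k div 2) n"
  have fin: "finite ?A" "finite ?B" using Bset_finite by auto
  have disj: "?A \<inter> ?B = {}"
  proof (rule ccontr)
    assume "?A \<inter> ?B \<noteq> {}"
    then obtain u v where "dblw u @ [if even k then 0 else 1] = (if even k then 1 else 0) # dblw v" by auto
    then have "count_list (dblw u @ [if even k then 0 else 1]) 1 = count_list ((if even k then 1 else 0) # dblw v) 1"
      by simp
    moreover have "even (count_list (dblw u @ [if even k then 0 else 1]) 1) \<longleftrightarrow> even k" by auto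
    moreover have "even (count_list ((if even k then 1 else 0) # dblw v) 1) \<longleftrightarrow> odd k" by auto
    ultimately show False by metis
  qed
  have "sum wsgn (Fx k (2 * n + 1)) = sum wsgn ?A + sum wsgn ?B"
    unfolding Fx_odd using fin disj by (rule sum.union_disjoint)
  also have "\<dots> = 2 * int (card (Bset (k div 2) n))"
    using sum_img[OF inj_snoc sg_dbl_snoc] sum_img[OF inj_cons sg_cons_dbl] by simp
  finally show ?thesis .
qed




lemma Fx_even_shape: assumes w: "w \<in> Fx k (2 * n + 2)"
  shows "(\<exists>u. w = dblw u \<and> even k) \<or>
         (\<exists>x u y. w = x # dblw u @ [y] \<and> (x = 0 \<or> x = 1) \<and> (y = 0 \<or> y = 1)
            \<and> odd ((if x = 1 then 1 else 0) + (if y = 1 then 1 else 0) + k))"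
proof -
  have wB: "w \<in> Bset k (2 * n + 2)" and fx: "iota k w = w" using w by (auto simp: Fx_def)
  have lw: "length w = 2 * n + 2" and bw: "set w \<subseteq> {0,1}" using Bset_bin[OF wB] by auto
  show ?thesis
  proof (cases "even (count_list w 1 + k)")
    case True
    then have "paired w" using fx by (simp add: iota_fix)
    then obtain u where "w = dblw u \<or> (\<exists>y. w = dblw u @ [y])" using paired_shape by blast
    moreover have "\<not> (\<exists>y. w = dblw u @ [y])"
    proof
      assume "\<exists>y. w = dblw u @ [y]"
      with lw have "2 * length u + 1 = 2 * n + 2" by auto
      then show False by arith
    qed
    ultimately have wu: "w = dblw u" by blast
    have "even k" using True wu by auto
    then show ?thesis using wu by blast
  next
    case False
    then have "paired (tl w)" using fx by (simp add: iota_fix)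
    obtain x v where wx: "w = x # v" using lw by (cases w) auto
    then have "paired v" using \<open>paired (tl w)\<close> by simp
    then obtain u where "v = dblw u \<or> (\<exists>y. v = dblw u @ [y])" using paired_shape by blast
    moreover have "v \<noteq> dblw u"
    proof
      assume "v = dblw u"
      with lw wx have "2 * length u + 1 = 2 * n + 2" by auto
      then show False by arith
    qed
    ultimately obtain y where wu: "w = x # dblw u @ [y]" using wx by blast
    have xy: "x = 0 \<or> x = 1" "y = 0 \<or> y = 1" using bw wu by auto
    have "odd ((if x = 1 then 1 else 0) + (if y = 1 then 1 else 0) + k)" using False wu xy by auto
    then show ?thesis using wu xy by blast
  qed
qed

lemma len_dbl_Bset: "dblw u \<in> Bset k m \<Longrightarrow> m = 2 * length u" by (simp add: Bset_iff)
lemma len_cs_Bset: "x # dblw u @ [y] \<in> Bset k m \<Longrightarrow> m = 2 * length u + 2" by (simp add: Bset_iff)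

lemma Fx_even_odd: assumes k: "odd k"
  shows "Fx k (2 * n + 2) = (\<lambda>u. 0 # dblw u @ [0]) ` Bset (k div 2) n
    \<union> (\<lambda>u. 1 # dblw u @ [1]) ` Bset (k div 2) n" (is "_ = ?A \<union> ?B")
proof (intro equalityI subsetI)
  fix w assume w: "w \<in> Fx k (2 * n + 2)"
  then have wB: "w \<in> Bset k (2 * n + 2)" by (simp add: Fx_def)
  from Fx_even_shape[OF w] k obtain x u y where wu: "w = x # dblw u @ [y]" and
    xy: "x = 0 \<or> x = 1" "y = 0 \<or> y = 1" and par: "odd ((if x = 1 then 1 else 0) + (if y = 1 then 1 else 0) + k)"
    by blast
  have "x = y" using xy par k by auto
  then have "u \<in> Bset (k div 2) n" using mem3[OF k xy(1), of u n] wB wu by simp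
  then show "w \<in> ?A \<union> ?B" using wu \<open>x = y\<close> xy by blast
next
  fix w assume "w \<in> ?A \<union> ?B"
  then obtain x u where u: "u \<in> Bset (k div 2) n" "w = x # dblw u @ [x]" "x = 0 \<or> x = 1" by blast
  then have "w \<in> Bset k (2 * n + 2)" using mem3[OF k u(3), of u n] by simp
  moreover have "iota k w = w" unfolding iota_fix using u dbl_paired k by auto
  ultimately show "w \<in> Fx k (2 * n + 2)" by (simp add: Fx_def)
qed

lemma S_even_odd: assumes k: "odd k"
  shows "sum wsgn (Fx k (2 * n + 2)) = 2 * int (card (Bset (k div 2) n))"
proof -
  let ?A = "(\<lambda>u. 0 # dblw u @ [0]) ` Bset (k div 2) n"
  let ?B = "(\<lambda>u. 1 # dblw u @ [1]) ` Bset (k div 2) n"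
  have fin: "finite ?A" "finite ?B" using Bset_finite by auto
  have disj: "?A \<inter> ?B = {}" by auto
  have "sum wsgn (Fx k (2 * n + 2)) = sum wsgn ?A + sum wsgn ?B"
    unfolding Fx_even_odd[OF k] using fin disj by (rule sum.union_disjoint)
  also have "\<dots> = 2 * int (card (Bset (k div 2) n))"
    using sum_img[OF inj_cs, of 0 0 1] sum_img[OF inj_cs, of 1 1 1] by (simp add: sg_cons_dbl_snoc)
  finally show ?thesis .
qed

lemma Fx_even_even: assumes k: "even k" "k \<ge> 1"
  shows "Fx k (2 * n + 2) = dblw ` Bset (k div 2) (n + 1)
    \<union> ((\<lambda>u. 0 # dblw u @ [1]) ` Bset (k div 2 - 1) n
    \<union> (\<lambda>u. 1 # dblw u @ [0]) ` Bset (k div 2) n)" (is "_ = ?D \<union> (?A \<union> ?B)")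
proof (intro equalityI subsetI)
  fix w assume w: "w \<in> Fx k (2 * n + 2)"
  then have wB: "w \<in> Bset k (2 * n + 2)" by (simp add: Fx_def)
  show "w \<in> ?D \<union> (?A \<union> ?B)"
  proof (cases "\<exists>u. w = dblw u \<and> even k")
    case True
    then obtain u where wu: "w = dblw u" by blast
    have "2 * n + 2 = 2 * (n + 1)" by simp
    then have "u \<in> Bset (k div 2) (n + 1)" using mem4[OF k(1), of u "n + 1"] wB wu by simp
    then show ?thesis using wu by blast
  next
    case False
    from Fx_even_shape[OF w] False obtain x u y where wu: "w = x # dblw u @ [y]" and
      xy: "x = 0 \<or> x = 1" "y = 0 \<or> y = 1" and par: "odd ((if x = 1 then 1 else 0) + (if y = 1 then 1 else 0) + k)"
      by blast
    have "(x = 0 \<and> y = 1) \<or> (x = 1 \<and> y = 0)" using xy par k by auto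
    then show ?thesis
    proof
      assume "x = 0 \<and> y = 1"
      then have "u \<in> Bset (k div 2 - 1) n" using mem5[OF k, of u n] wB wu by simp
      then show ?thesis using wu \<open>x = 0 \<and> y = 1\<close> by blast
    next
      assume "x = 1 \<and> y = 0"
      then have "u \<in> Bset (k div 2) n" using mem6[OF k(1), of u n] wB wu by simp
      then show ?thesis using wu \<open>x = 1 \<and> y = 0\<close> by blast
    qed
  qed
next
  fix w assume "w \<in> ?D \<union> (?A \<union> ?B)"
  then show "w \<in> Fx k (2 * n + 2)"
  proof (elim UnE)
    assume "w \<in> ?D"
    then obtain u where u: "u \<in> Bset (k div 2) (n + 1)" "w = dblw u" by blast
    have "2 * n + 2 = 2 * (n + 1)" by simp
    then have "w \<in> Bset k (2 * n + 2)" using mem4[OF k(1), of u "n + 1"] u by simp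
    moreover have "iota k w = w" unfolding iota_fix using u dbl_paired k by auto
    ultimately show ?thesis by (simp add: Fx_def)
  next
    assume "w \<in> ?A"
    then obtain u where u: "u \<in> Bset (k div 2 - 1) n" "w = 0 # dblw u @ [1]" by blast
    then have "w \<in> Bset k (2 * n + 2)" using mem5[OF k, of u n] by simp
    moreover have "iota k w = w" unfolding iota_fix using u dbl_paired k by auto
    ultimately show ?thesis by (simp add: Fx_def)
  next
    assume "w \<in> ?B"
    then obtain u where u: "u \<in> Bset (k div 2) n" "w = 1 # dblw u @ [0]" by blast
    then have "w \<in> Bset k (2 * n + 2)" using mem6[OF k(1), of u n] by simp
    moreover have "iota k w = w" unfolding iota_fix using u dbl_paired k by auto
    ultimately show ?thesis by (simp add: Fx_def)
  qed
qed

lemma S_even_even: assumes k: "even k" "k \<ge> 1"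
  shows "sum wsgn (Fx k (2 * n + 2)) = int (card (Bset (k div 2) (n + 1))) + int (card (Bset (k div 2 - 1) n))
     - int (card (Bset (k div 2) n))"
proof -
  let ?D = "dblw ` Bset (k div 2) (n + 1)"
  let ?A = "(\<lambda>u. 0 # dblw u @ [1]) ` Bset (k div 2 - 1) n"
  let ?B = "(\<lambda>u. 1 # dblw u @ [0]) ` Bset (k div 2) n"
  have fin: "finite ?D" "finite ?A" "finite ?B" using Bset_finite by auto
  have disj1: "?A \<inter> ?B = {}" by auto
  have disj2: "?D \<inter> (?A \<union> ?B) = {}"
  proof (rule ccontr)
    assume "?D \<inter> (?A \<union> ?B) \<noteq> {}"
    then obtain u v x y where e: "dblw u = x # dblw v @ [y]" and xy: "(x = 0 \<and> y = 1) \<or> (x = 1 \<and> y = 0)" by blast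
    then have "count_list (dblw u) 1 = count_list (x # dblw v @ [y]) 1" by simp
    moreover have "even (count_list (dblw u) 1)" by simp
    moreover have "odd (count_list (x # dblw v @ [y]) 1)" using xy by auto
    ultimately show False by metis
  qed
  have "sum wsgn (Fx k (2 * n + 2)) = sum wsgn ?D + (sum wsgn ?A + sum wsgn ?B)"
    unfolding Fx_even_even[OF k] using fin disj1 disj2
    by (simp add: sum.union_disjoint)
  also have "\<dots> = int (card (Bset (k div 2) (n + 1))) + int (card (Bset (k div 2 - 1) n))
     - int (card (Bset (k div 2) n))"
    using sum_img[OF inj_d, of 1 "Bset (k div 2) (n + 1)"] sum_img[OF inj_cs, of 0 1 1] sum_img[OF inj_cs, of 1 0 "-1"]
    by (simp add: sg_cons_dbl_snoc sg_dbl)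
  finally show ?thesis .
qed




lemma B_card: "B K n = card (Bset K n)"
proof (cases "K = 0")
  case True
  have "Bset 0 n = {}"
  proof (rule ccontr)
    assume "Bset 0 n \<noteq> {}"
    then obtain w where "w \<in> Bset 0 n" by blast
    then have "okh 0 (int (count_list w 1)) w" by (simp add: Bset_iff)
    then show False using okh_ge by fastforce
  qed
  then show ?thesis using True by (simp add: B_def)
qed (simp add: B_def)

lemma O_rel: "int (2 * Ocnt k m) = int (card (Bset k m)) - sum wsgn (Bset k m)"
proof -
  let ?A = "Bset k m"
  let ?O = "{w \<in> ?A. odd_word w}"
  let ?E = "{w \<in> ?A. \<not> odd_word w}"
  have fin: "finite ?O" "finite ?E" using Bset_finite by auto
  have un: "?A = ?E \<union> ?O" by auto
  have dj: "?E \<inter> ?O = {}" by auto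
  have ow: "odd_word w \<longleftrightarrow> odd (ninv w)" for w by (simp add: odd_word_def inv_G)
  have "sum wsgn ?O = sum (\<lambda>_. -1) ?O" by (rule sum.cong) (auto simp: wsgn_def ow)
  moreover have "sum wsgn ?E = sum (\<lambda>_. 1) ?E" by (rule sum.cong) (auto simp: wsgn_def ow)
  ultimately have "sum wsgn ?A = int (card ?E) - int (card ?O)"
    using sum.union_disjoint[OF fin(2) fin(1) dj, of wsgn] un by simp
  moreover have "card ?A = card ?E + card ?O" using card_Un_disjoint[OF fin(2) fin(1) dj] un by simp
  ultimately show ?thesis by (simp add: Ocnt_def)
qed

theorem theorem4p4:
  fixes k m :: nat
  assumes "k \<ge> 1" and "m \<ge> 1"
  shows "(even k \<and> even m \<longrightarrow>
           int (2 * Ocnt k m) = int (B k m) + int (B (k div 2) ((m - 2) div 2))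
                             - int (B (k div 2) (m div 2)) - int (B ((k - 2) div 2) ((m - 2) div 2)))
       \<and> (\<not> (even k \<and> even m) \<longrightarrow>
           int (2 * Ocnt k m) = int (B k m) - 2 * int (B (k div 2) ((m - 1) div 2)))"
proof -
  have S: "sum wsgn (Bset k m) = sum wsgn (Fx k m)" unfolding Fx_def by (rule S_fix)
  have O: "int (2 * Ocnt k m) = int (B k m) - sum wsgn (Fx k m)" using O_rel[of k m] S B_card[of k m] by simp
  show ?thesis
  proof (cases "even m")
    case False
    then obtain n where m: "m = 2 * n + 1" using oddE by blast
    have e: "(m - 1) div 2 = n" using m by simp
    have "sum wsgn (Fx k m) = 2 * int (B (k div 2) n)" using S_odd[of k n] B_card[of "k div 2" n] m by simp
    then show ?thesis using O e False by simp
  next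
    case True
    then obtain n' where "m = 2 * n'" by (rule evenE)
    moreover have "n' \<ge> 1" using assms(2) \<open>m = 2 * n'\<close> by simp
    ultimately have "m = 2 * (n' - 1) + 2" by simp
    then obtain n where m: "m = 2 * n + 2" by blast
    have e1: "(m - 1) div 2 = n" "(m - 2) div 2 = n" "m div 2 = n + 1" using m by auto
    show ?thesis
    proof (cases "even k")
      case False
      have "sum wsgn (Fx k m) = 2 * int (B (k div 2) n)" using S_even_odd[OF False, of n] B_card[of "k div 2" n] m by simp
      then show ?thesis using O e1 False by simp
    next
      case True
      have e2: "(k - 2) div 2 = k div 2 - 1" by simp
      have "sum wsgn (Fx k m) = int (B (k div 2) (n + 1)) + int (B (k div 2 - 1) n) - int (B (k div 2) n)"
        using S_even_even[OF True assms(1), of n] B_card[of "k div 2" n] B_card[of "k div 2" "n + 1"]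
          B_card[of "k div 2 - 1" n] m by simp
      then show ?thesis using O e1 e2 True \<open>even m\<close> by simp
    qed
  qed
qed


end
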